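(* Let $\alpha:ca^+_Z\to\mathbb{R}\cup\{+\infty\}$ be such that $\inf_{\mu\in ca^+_Z}\alpha(\mu)\in\mathbb{R}$ and $\alpha(\mu)\ge\varphi(\langle Z,\mu\rangle)$ for all $\mu\in ca^+_Z$, for some function $\varphi:\mathbb{R}_+\to\mathbb{R}\cup\{+\infty\}$ with $\lim_{x\to+\infty}\varphi(x)/x=+\infty$. Then: (i) $\psi(X):=\sup_{\mu\in ca^+_Z}(\langle X,\mu\rangle-\alpha(\mu))$ defines an increasing convex functional $\psi:B_Z\to\mathbb{R}$; (ii) if all sublevel sets $\{\mu\in ca^+_Z:\alpha(\mu)\le a\}$, $a\in\mathbb{R}$, are relatively $\sigma(ca^+_Z,C_Z)$-compact, then $\psi(X_n)\downarrow\psi(X)$ for every sequence $(X_n)$ in $C_Z$ decreasing pointwise to some $X\in C_Z$; (iii) if all sublevel sets $\{\mu\in ca^+_Z:\alpha(\mu)\le a\}$, $a\in\mathbb{R}$, are $\sigma(ca^+_Z,C_Z)$-compact, then $\psi(X_n)\downarrow\psi(X)$ for every sequence $(X_n)$ in $C_Z$ decreasing pointwise to some $X\in U_Z$, and $\psi(X)=\max_{\mu\in ca^+_Z}(\langle X,\mu\rangle-\alpha(\mu))$ for all $X\in U_Z$.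
   Context: Fix integers $J\ge0$, $T\ge1$. $\Omega$ is a non-empty subset of $((0,\infty)\times\mathbb{R}^J)^T$ with the Euclidean metric. $Z:\Omega\to[1,\infty)$ is continuous with $\{\omega\in\Omega:Z(\omega)\le z\}$ compact for every $z\in\mathbb{R}_+$. $B_Z$ is the space of Borel measurable $X:\Omega\to\mathbb{R}$ with $X/Z$ bounded; $U_Z$ (resp. $C_Z$) is the set of upper semicontinuous (resp. continuous) elements of $B_Z$. $ca^+_Z$ is the set of (nonnegative) Borel measures $\mu$ on $\Omega$ with $\langle Z,\mu\rangle:=\int Z\,d\mu<\infty$; $\langle X,\mu\rangle=\int X\,d\mu$. $\sigma(ca^+_Z,C_Z)$ is the coarsest topology on $ca^+_Z$ making $\mu\mapsto\langle X,\mu\rangle$ continuous for all $X\in C_Z$. $\psi$ increasing means $\psi(X)\ge\psi(Y)$ whenever $X\ge Y$; $\downarrow$ denotes monotone decreasing convergence. *)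

theory Defs
  imports "HOL-Analysis.Analysis"
begin

text \<open>Points of \<Omega> live in ((0,\<infinity>) \<times> \<real>^J)^T, modelled as vectors of type real^'k^'t where
  'k has J+1 elements and one fixed coordinate k0 :: 'k is the positive one.
  The norm of real^'k^'t is the Euclidean norm on \<real>^(T(J+1)).\<close>

definition state_space :: "'k \<Rightarrow> (real^'k^'t) set" where
  "state_space k0 = {\<omega>. \<forall>t. \<omega> $ t $ k0 > 0}"

definition ca_Z :: "'a::topological_space set \<Rightarrow> ('a \<Rightarrow> real) \<Rightarrow> 'a measure set" where
  "ca_Z \<Omega> Z = {\<mu>. sets \<mu> = sets (restrict_space borel \<Omega>) \<and>
                    (\<integral>\<^sup>+ \<omega>. ennreal (Z \<omega>) \<partial>\<mu>) < \<infinity>}"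

definition B_Z :: "'a::topological_space set \<Rightarrow> ('a \<Rightarrow> real) \<Rightarrow> ('a \<Rightarrow> real) set" where
  "B_Z \<Omega> Z = {X. X \<in> borel_measurable (restrict_space borel \<Omega>) \<and>
                   (\<exists>c. \<forall>\<omega>\<in>\<Omega>. \<bar>X \<omega> / Z \<omega>\<bar> \<le> c)}"

definition usc_on :: "'a::topological_space set \<Rightarrow> ('a \<Rightarrow> real) \<Rightarrow> bool" where
  "usc_on \<Omega> X \<longleftrightarrow> (\<forall>a. openin (top_of_set \<Omega>) {\<omega>\<in>\<Omega>. X \<omega> < a})"

definition U_Z :: "'a::topological_space set \<Rightarrow> ('a \<Rightarrow> real) \<Rightarrow> ('a \<Rightarrow> real) set" where
  "U_Z \<Omega> Z = {X \<in> B_Z \<Omega> Z. usc_on \<Omega> X}"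

definition C_Z :: "'a::topological_space set \<Rightarrow> ('a \<Rightarrow> real) \<Rightarrow> ('a \<Rightarrow> real) set" where
  "C_Z \<Omega> Z = {X \<in> B_Z \<Omega> Z. continuous_on \<Omega> X}"

definition weak_top :: "'a::topological_space set \<Rightarrow> ('a \<Rightarrow> real) \<Rightarrow> 'a measure topology" where
  "weak_top \<Omega> Z = topology_generated_by
     {{\<mu> \<in> ca_Z \<Omega> Z. (\<integral>\<omega>. X \<omega> \<partial>\<mu>) \<in> U} | X U. X \<in> C_Z \<Omega> Z \<and> open U}"

definition psi :: "'a::topological_space set \<Rightarrow> ('a \<Rightarrow> real) \<Rightarrow> ('a measure \<Rightarrow> ereal)
                     \<Rightarrow> ('a \<Rightarrow> real) \<Rightarrow> ereal" where
  "psi \<Omega> Z \<alpha> X = (SUP \<mu>\<in>ca_Z \<Omega> Z. ereal (\<integral>\<omega>. X \<omega> \<partial>\<mu>) - \<alpha> \<mu>)"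

end

theory Submission
  imports Defs
begin


locale zset =
  fixes \<Omega> :: "'a::metric_space set" and Z :: "'a \<Rightarrow> real"
  assumes Z_cont: "continuous_on \<Omega> Z"
    and Z_ge1: "\<forall>\<omega>\<in>\<Omega>. Z \<omega> \<ge> 1"
begin

abbreviation "M \<equiv> ca_Z \<Omega> Z"

lemma caZ_sets: "\<mu> \<in> M \<Longrightarrow> sets \<mu> = sets (restrict_space borel \<Omega>)"
  by (simp add: ca_Z_def)

lemma caZ_space: "\<mu> \<in> M \<Longrightarrow> space \<mu> = \<Omega>"
  using sets_eq_imp_space_eq[OF caZ_sets] by (simp add: space_restrict_space)

lemma caZ_meas: "\<mu> \<in> M \<Longrightarrow> f \<in> borel_measurable (restrict_space borel \<Omega>) \<Longrightarrow> f \<in> borel_measurable \<mu>"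
  using measurable_cong_sets[OF caZ_sets refl] by blast

lemma Z_meas: "Z \<in> borel_measurable (restrict_space borel \<Omega>)"
  by (rule borel_measurable_continuous_on_restrict[OF Z_cont])

lemma caZ_intZ: assumes "\<mu> \<in> M" shows "integrable \<mu> Z"
proof -
  have "(\<integral>\<^sup>+x. norm (Z x) \<partial>\<mu>) = (\<integral>\<^sup>+x. ennreal (Z x) \<partial>\<mu>)"
    using Z_ge1 caZ_space[OF assms] by (intro nn_integral_cong) auto
  also have "\<dots> < \<infinity>" using assms by (simp add: ca_Z_def)
  finally show ?thesis using caZ_meas[OF assms Z_meas]
    by (simp add: integrable_iff_bounded)
qed

lemma caZ_finite: assumes "\<mu> \<in> M" shows "finite_measure \<mu>"
proof
  have "emeasure \<mu> (space \<mu>) = (\<integral>\<^sup>+x. indicator (space \<mu>) x \<partial>\<mu>)" by simp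
  also have "\<dots> \<le> (\<integral>\<^sup>+x. ennreal (Z x) \<partial>\<mu>)"
    using Z_ge1 caZ_space[OF assms] by (intro nn_integral_mono) (auto simp: indicator_def)
  also have "\<dots> < \<infinity>" using assms by (simp add: ca_Z_def)
  finally show "emeasure \<mu> (space \<mu>) \<noteq> \<infinity>" by simp
qed

lemma BZ_meas: "X \<in> B_Z \<Omega> Z \<Longrightarrow> X \<in> borel_measurable (restrict_space borel \<Omega>)"
  by (simp add: B_Z_def)

lemma BZ_bound: assumes "X \<in> B_Z \<Omega> Z" shows "\<exists>c\<ge>0. \<forall>\<omega>\<in>\<Omega>. \<bar>X \<omega>\<bar> \<le> c * Z \<omega>"
proof -
  obtain c where c: "\<forall>\<omega>\<in>\<Omega>. \<bar>X \<omega> / Z \<omega>\<bar> \<le> c" using assms by (auto simp: B_Z_def)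
  show ?thesis
  proof (intro exI[of _ "max c 0"] conjI ballI)
    fix \<omega> assume w: "\<omega> \<in> \<Omega>"
    have Z: "Z \<omega> \<ge> 1" using Z_ge1 w by auto
    have "\<bar>X \<omega>\<bar> / Z \<omega> \<le> max c 0" using c w Z by (auto simp: abs_div)
    then show "\<bar>X \<omega>\<bar> \<le> max c 0 * Z \<omega>" using Z by (simp add: divide_le_eq)
  qed simp
qed

lemma BZ_int: assumes "X \<in> B_Z \<Omega> Z" "\<mu> \<in> M" shows "integrable \<mu> X"
proof -
  obtain c where c: "c \<ge> 0" "\<forall>\<omega>\<in>\<Omega>. \<bar>X \<omega>\<bar> \<le> c * Z \<omega>" using BZ_bound[OF assms(1)] by blast
  show ?thesis
  proof (rule Bochner_Integration.integrable_bound[of _ "\<lambda>\<omega>. c * Z \<omega>"])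
    show "integrable \<mu> (\<lambda>\<omega>. c * Z \<omega>)" using caZ_intZ[OF assms(2)] by simp
    show "X \<in> borel_measurable \<mu>" using caZ_meas[OF assms(2) BZ_meas[OF assms(1)]] .
    show "AE x in \<mu>. norm (X x) \<le> norm (c * Z x)"
      using c Z_ge1 caZ_space[OF assms(2)] by (intro AE_I2) auto
  qed
qed

lemma BZ_int_le: assumes "X \<in> B_Z \<Omega> Z" "\<mu> \<in> M" "c \<ge> 0" "\<forall>\<omega>\<in>\<Omega>. X \<omega> \<le> c * Z \<omega>"
  shows "(\<integral>\<omega>. X \<omega> \<partial>\<mu>) \<le> c * (\<integral>\<omega>. Z \<omega> \<partial>\<mu>)"
proof -
  have "(\<integral>\<omega>. X \<omega> \<partial>\<mu>) \<le> (\<integral>\<omega>. c * Z \<omega> \<partial>\<mu>)"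
    using assms caZ_space[OF assms(2)] BZ_int caZ_intZ by (intro integral_mono) auto
  then show ?thesis by simp
qed

lemma intZ_nonneg: "\<mu> \<in> M \<Longrightarrow> (\<integral>\<omega>. Z \<omega> \<partial>\<mu>) \<ge> 0"
  using Z_ge1 caZ_space by (intro integral_nonneg_AE AE_I2) force

lemma C_sub_B: "C_Z \<Omega> Z \<subseteq> B_Z \<Omega> Z" "U_Z \<Omega> Z \<subseteq> B_Z \<Omega> Z"
  by (auto simp: C_Z_def U_Z_def)

end



locale psiset = zset \<Omega> Z for \<Omega> :: "'a::metric_space set" and Z +
  fixes \<alpha> :: "'a measure \<Rightarrow> ereal" and \<phi> :: "real \<Rightarrow> ereal"
  assumes \<alpha>_not_minf: "\<forall>\<mu>\<in>ca_Z \<Omega> Z. \<alpha> \<mu> \<noteq> -\<infinity>"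
    and \<alpha>_inf_real: "(INF \<mu>\<in>ca_Z \<Omega> Z. \<alpha> \<mu>) \<noteq> \<infinity> \<and> (INF \<mu>\<in>ca_Z \<Omega> Z. \<alpha> \<mu>) \<noteq> -\<infinity>"
    and \<phi>_growth: "((\<lambda>x. \<phi> x / ereal x) \<longlongrightarrow> \<infinity>) at_top"
    and \<alpha>_ge_\<phi>: "\<forall>\<mu>\<in>ca_Z \<Omega> Z. \<alpha> \<mu> \<ge> \<phi> (\<integral>\<omega>. Z \<omega> \<partial>\<mu>)"
begin

definition "mm = real_of_ereal (INF \<mu>\<in>M. \<alpha> \<mu>)"

lemma alpha_ge_m: "\<mu> \<in> M \<Longrightarrow> ereal mm \<le> \<alpha> \<mu>"
proof -
  assume "\<mu> \<in> M"
  then have "(INF \<mu>\<in>M. \<alpha> \<mu>) \<le> \<alpha> \<mu>" by (rule INF_lower)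
  moreover have "ereal mm = (INF \<mu>\<in>M. \<alpha> \<mu>)" using \<alpha>_inf_real unfolding mm_def
    by (cases "(INF \<mu>\<in>M. \<alpha> \<mu>)") auto
  ultimately show ?thesis by simp
qed

lemma exists_mu0: "\<exists>\<mu>0\<in>M. \<alpha> \<mu>0 < \<infinity>"
proof -
  have "(INF \<mu>\<in>M. \<alpha> \<mu>) < \<infinity>" using \<alpha>_inf_real by (simp add: less_top)
  then show ?thesis unfolding INF_less_iff .
qed

lemma phi_big: "\<exists>K. \<forall>x\<ge>K. ereal (a * x) < \<phi> x"
proof -
  have "eventually (\<lambda>x. ereal a < \<phi> x / ereal x) at_top"
    using order_tendstoD(1)[OF \<phi>_growth, of "ereal a"] by simp
  then obtain K where K: "\<And>x. x \<ge> K \<Longrightarrow> ereal a < \<phi> x / ereal x"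
    by (auto simp: eventually_at_top_linorder)
  show ?thesis
  proof (intro exI[of _ "max K 1"] allI impI)
    fix x :: real assume x: "max K 1 \<le> x"
    then have xp: "x > 0" by simp
    have h: "ereal a < \<phi> x / ereal x" using K x by simp
    show "ereal (a * x) < \<phi> x"
    proof (cases "\<phi> x")
      case (real r)
      then have "a < r / x" using h xp by simp
      then have "a * x < r" using xp by (simp add: less_divide_eq)
      then show ?thesis using real by simp
    next
      case PInf then show ?thesis by simp
    next
      case MInf then show ?thesis using h xp by simp
    qed
  qed
qed

lemma tail: assumes "c \<ge> 0"
  shows "\<exists>R B. \<forall>\<mu>\<in>M. \<forall>X\<in>B_Z \<Omega> Z. (\<forall>\<omega>\<in>\<Omega>. X \<omega> \<le> c * Z \<omega>) \<longrightarrow>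
     (\<alpha> \<mu> > ereal R \<longrightarrow> ereal (\<integral>\<omega>. X \<omega> \<partial>\<mu>) - \<alpha> \<mu> < ereal t) \<and>
     ereal (\<integral>\<omega>. X \<omega> \<partial>\<mu>) - \<alpha> \<mu> \<le> ereal B"
proof -
  obtain K where K: "\<And>x. x \<ge> K \<Longrightarrow> ereal ((c+1) * x) < \<phi> x" using phi_big by blast
  define K1 where "K1 = max K (max 1 (\<bar>t\<bar> + 1))"
  have K1: "K1 \<ge> K" "K1 \<ge> \<bar>t\<bar> + 1" unfolding K1_def by auto
  have aux: "(ereal (c * K1 - t) < \<alpha> \<mu> \<longrightarrow> ereal (\<integral>\<omega>. X \<omega> \<partial>\<mu>) - \<alpha> \<mu> < ereal t) \<and>
     ereal (\<integral>\<omega>. X \<omega> \<partial>\<mu>) - \<alpha> \<mu> \<le> ereal (max t (c * K1 - mm))"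
    if mu: "\<mu> \<in> M" and X: "X \<in> B_Z \<Omega> Z" and Xc: "\<forall>\<omega>\<in>\<Omega>. X \<omega> \<le> c * Z \<omega>" for \<mu> X
  proof -
    define z where "z = (\<integral>\<omega>. Z \<omega> \<partial>\<mu>)"
    have IX: "(\<integral>\<omega>. X \<omega> \<partial>\<mu>) \<le> c * z" unfolding z_def using BZ_int_le[OF X mu assms Xc] .
    have ag: "\<alpha> \<mu> \<ge> \<phi> z" using \<alpha>_ge_\<phi> mu z_def by auto
    have am: "\<alpha> \<mu> \<ge> ereal mm" using alpha_ge_m[OF mu] .
    have key: "(z \<ge> K1 \<and> ereal (\<integral>\<omega>. X \<omega> \<partial>\<mu>) - \<alpha> \<mu> < ereal t) \<or>
               (z < K1 \<and> ereal (\<integral>\<omega>. X \<omega> \<partial>\<mu>) - \<alpha> \<mu> \<le> ereal (c * K1) - \<alpha> \<mu>)"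
    proof (cases "z \<ge> K1")
      case True
      then have "ereal ((c+1) * z) < \<alpha> \<mu>" using K[of z] K1 ag by (meson order.trans order_less_le_trans)
      then have "ereal (\<integral>\<omega>. X \<omega> \<partial>\<mu>) - \<alpha> \<mu> < ereal t"
        using IX True K1 assms
        by (cases "\<alpha> \<mu>") (auto simp: algebra_simps)
      then show ?thesis using True by simp
    next
      case False
      then have "c * z \<le> c * K1" using assms by (intro mult_left_mono) auto
      then have "ereal (\<integral>\<omega>. X \<omega> \<partial>\<mu>) - \<alpha> \<mu> \<le> ereal (c * K1) - \<alpha> \<mu>"
        using IX by (intro ereal_minus_mono) auto
      then show ?thesis using False by simp
    qed
    have "ereal (c * K1 - t) < \<alpha> \<mu> \<longrightarrow> ereal (\<integral>\<omega>. X \<omega> \<partial>\<mu>) - \<alpha> \<mu> < ereal t"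
      using key by (cases "\<alpha> \<mu>") auto
    moreover have "ereal (\<integral>\<omega>. X \<omega> \<partial>\<mu>) - \<alpha> \<mu> \<le> ereal (max t (c * K1 - mm))"
      using key am by (cases "\<alpha> \<mu>") (auto simp: le_max_iff_disj)
    ultimately show "(ereal (c * K1 - t) < \<alpha> \<mu> \<longrightarrow> ereal (\<integral>\<omega>. X \<omega> \<partial>\<mu>) - \<alpha> \<mu> < ereal t) \<and>
     ereal (\<integral>\<omega>. X \<omega> \<partial>\<mu>) - \<alpha> \<mu> \<le> ereal (max t (c * K1 - mm))" by blast
  qed
  show ?thesis using aux by blast
qed

abbreviation "ps \<equiv> psi \<Omega> Z \<alpha>"

lemma psi_ge: "\<mu> \<in> M \<Longrightarrow> ereal (\<integral>\<omega>. X \<omega> \<partial>\<mu>) - \<alpha> \<mu> \<le> ps X"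
  unfolding psi_def by (rule SUP_upper)

lemma psi_fin: assumes X: "X \<in> B_Z \<Omega> Z" shows "ps X \<noteq> \<infinity> \<and> ps X \<noteq> -\<infinity>"
proof
  obtain c where c: "c \<ge> 0" "\<forall>\<omega>\<in>\<Omega>. \<bar>X \<omega>\<bar> \<le> c * Z \<omega>" using BZ_bound[OF X] by blast
  obtain R B where RB: "\<forall>\<mu>\<in>M. \<forall>X\<in>B_Z \<Omega> Z. (\<forall>\<omega>\<in>\<Omega>. X \<omega> \<le> c * Z \<omega>) \<longrightarrow>
     ereal (\<integral>\<omega>. X \<omega> \<partial>\<mu>) - \<alpha> \<mu> \<le> ereal B" using tail[OF c(1), of 0] by blast
  have Xc: "\<forall>\<omega>\<in>\<Omega>. X \<omega> \<le> c * Z \<omega>" using c(2) by (meson abs_ge_self order.trans)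
  have "ps X \<le> ereal B" unfolding psi_def
    using RB X Xc by (intro SUP_least) auto
  then show "ps X \<noteq> \<infinity>" by auto
  obtain \<mu>0 where mu0: "\<mu>0 \<in> M" "\<alpha> \<mu>0 < \<infinity>" using exists_mu0 by blast
  have "ereal (\<integral>\<omega>. X \<omega> \<partial>\<mu>0) - \<alpha> \<mu>0 \<le> ps X" using psi_ge[OF mu0(1)] .
  moreover have "ereal (\<integral>\<omega>. X \<omega> \<partial>\<mu>0) - \<alpha> \<mu>0 \<noteq> -\<infinity>" using mu0 \<alpha>_not_minf
    by (cases "\<alpha> \<mu>0") auto
  ultimately show "ps X \<noteq> -\<infinity>" by auto
qed

lemma psi_mono: assumes X: "X \<in> B_Z \<Omega> Z" and Y: "Y \<in> B_Z \<Omega> Z" and le: "\<forall>\<omega>\<in>\<Omega>. X \<omega> \<ge> Y \<omega>"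
  shows "ps X \<ge> ps Y"
  unfolding psi_def
proof (intro SUP_mono bexI)
  fix \<mu> assume mu: "\<mu> \<in> M"
  have "(\<integral>\<omega>. Y \<omega> \<partial>\<mu>) \<le> (\<integral>\<omega>. X \<omega> \<partial>\<mu>)"
    using BZ_int[OF X mu] BZ_int[OF Y mu] le caZ_space[OF mu] by (intro integral_mono) auto
  then show "ereal (\<integral>\<omega>. Y \<omega> \<partial>\<mu>) - \<alpha> \<mu> \<le> ereal (\<integral>\<omega>. X \<omega> \<partial>\<mu>) - \<alpha> \<mu>"
    by (intro ereal_minus_mono) auto
  show "\<mu> \<in> M" by fact
qed

lemma psi_convex: assumes X: "X \<in> B_Z \<Omega> Z" and Y: "Y \<in> B_Z \<Omega> Z" and l: "0 \<le> l" "l \<le> 1"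
  shows "ps (\<lambda>\<omega>. l * X \<omega> + (1 - l) * Y \<omega>) \<le> ereal l * ps X + ereal (1 - l) * ps Y"
proof -
  obtain p where p: "ps X = ereal p" using psi_fin[OF X] by (cases "ps X") auto
  obtain q where q: "ps Y = ereal q" using psi_fin[OF Y] by (cases "ps Y") auto
  show ?thesis unfolding psi_def[of _ _ _ "\<lambda>\<omega>. l * X \<omega> + (1 - l) * Y \<omega>"] p q
  proof (intro SUP_least)
    fix \<mu> assume mu: "\<mu> \<in> M"
    show "ereal (\<integral>\<omega>. l * X \<omega> + (1 - l) * Y \<omega> \<partial>\<mu>) - \<alpha> \<mu> \<le> ereal l * ereal p + ereal (1 - l) * ereal q"
    proof (cases "\<alpha> \<mu>")
      case (real r)
      have hx: "(\<integral>\<omega>. X \<omega> \<partial>\<mu>) - r \<le> p" using psi_ge[OF mu, of X] p real by simp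
      have hy: "(\<integral>\<omega>. Y \<omega> \<partial>\<mu>) - r \<le> q" using psi_ge[OF mu, of Y] q real by simp
      have I: "(\<integral>\<omega>. l * X \<omega> + (1 - l) * Y \<omega> \<partial>\<mu>) = l * (\<integral>\<omega>. X \<omega> \<partial>\<mu>) + (1 - l) * (\<integral>\<omega>. Y \<omega> \<partial>\<mu>)"
        using BZ_int[OF X mu] BZ_int[OF Y mu] by simp
      have "l * ((\<integral>\<omega>. X \<omega> \<partial>\<mu>) - r) + (1 - l) * ((\<integral>\<omega>. Y \<omega> \<partial>\<mu>) - r) \<le> l * p + (1 - l) * q"
        using hx hy l by (intro add_mono mult_left_mono) auto
      then show ?thesis using real I by (simp add: algebra_simps)
    next
      case PInf then show ?thesis by simp
    next
      case MInf then show ?thesis using \<alpha>_not_minf mu by simp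
    qed
  qed
qed

end



context zset begin

lemma zero_CZ: "(\<lambda>_. 0) \<in> C_Z \<Omega> Z"
  by (auto simp: C_Z_def B_Z_def)

lemma wt_topspace: "topspace (weak_top \<Omega> Z) = M"
proof -
  have "M \<in> {{\<mu> \<in> M. (\<integral>\<omega>. X \<omega> \<partial>\<mu>) \<in> U} | X U. X \<in> C_Z \<Omega> Z \<and> open U}"
    using zero_CZ by (intro CollectI exI[of _ "\<lambda>_. 0"] exI[of _ UNIV]) auto
  then show ?thesis unfolding weak_top_def topology_generated_by_topspace by blast
qed

lemma wt_open: "X \<in> C_Z \<Omega> Z \<Longrightarrow> open U \<Longrightarrow> openin (weak_top \<Omega> Z) {\<mu> \<in> M. (\<integral>\<omega>. X \<omega> \<partial>\<mu>) \<in> U}"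
  unfolding weak_top_def by (rule topology_generated_by_Basis) blast

lemma CZ_diff: assumes "X \<in> C_Z \<Omega> Z" "Y \<in> C_Z \<Omega> Z" shows "(\<lambda>\<omega>. X \<omega> - Y \<omega>) \<in> C_Z \<Omega> Z"
proof -
  obtain c where c: "\<forall>\<omega>\<in>\<Omega>. \<bar>X \<omega> / Z \<omega>\<bar> \<le> c" using assms by (auto simp: C_Z_def B_Z_def)
  obtain d where d: "\<forall>\<omega>\<in>\<Omega>. \<bar>Y \<omega> / Z \<omega>\<bar> \<le> d" using assms by (auto simp: C_Z_def B_Z_def)
  have "\<forall>\<omega>\<in>\<Omega>. \<bar>(X \<omega> - Y \<omega>) / Z \<omega>\<bar> \<le> c + d"
  proof
    fix \<omega> assume "\<omega> \<in> \<Omega>"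
    then have "\<bar>X \<omega> / Z \<omega> - Y \<omega> / Z \<omega>\<bar> \<le> c + d" using c d abs_triangle_ineq4[of "X \<omega> / Z \<omega>" "Y \<omega> / Z \<omega>"]
      by (meson add_mono order_trans)
    then show "\<bar>(X \<omega> - Y \<omega>) / Z \<omega>\<bar> \<le> c + d" by (simp add: diff_divide_distrib)
  qed
  then show ?thesis using assms
    by (auto simp: C_Z_def B_Z_def intro!: continuous_on_diff borel_measurable_diff)
qed

end

context psiset begin

lemma eps_conv:
  fixes f :: "nat \<Rightarrow> ereal" and p :: real
  assumes dec: "decseq f" and ge: "\<And>n. f n \<ge> ereal p" and eps: "\<And>e. e > 0 \<Longrightarrow> \<exists>N. f N \<le> ereal (p + e)"
  shows "f \<longlonglongrightarrow> ereal p"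
proof -
  have "(INF n. f n) = ereal p"
  proof (rule antisym)
    show "(INF n. f n) \<le> ereal p"
    proof (rule ereal_le_epsilon2)
      fix e :: real assume "0 < e"
      then obtain N where "f N \<le> ereal (p + e)" using eps by blast
      then show "(INF n. f n) \<le> ereal p + ereal e" by (metis INF_lower2 UNIV_I plus_ereal.simps(1))
    qed
    show "ereal p \<le> (INF n. f n)" using ge by (rule INF_greatest)
  qed
  then show ?thesis using LIMSEQ_INF[OF dec] by simp
qed

end

locale dseq = psiset \<Omega> Z \<alpha> \<phi> for \<Omega> :: "'a::metric_space set" and Z \<alpha> \<phi> +
  fixes Xs :: "nat \<Rightarrow> 'a \<Rightarrow> real" and X :: "'a \<Rightarrow> real"
  assumes Xs_C: "\<And>n. Xs n \<in> C_Z \<Omega> Z" and X_B: "X \<in> B_Z \<Omega> Z"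
    and Xs_dec: "\<forall>\<omega>\<in>\<Omega>. \<forall>n. Xs (Suc n) \<omega> \<le> Xs n \<omega>"
    and Xs_lim: "\<forall>\<omega>\<in>\<Omega>. (\<lambda>n. Xs n \<omega>) \<longlonglongrightarrow> X \<omega>"
begin

lemma Xs_B: "Xs n \<in> B_Z \<Omega> Z" using Xs_C C_sub_B by blast

lemma Xs_decseq: "\<omega> \<in> \<Omega> \<Longrightarrow> decseq (\<lambda>n. Xs n \<omega>)"
  using Xs_dec by (intro decseq_SucI) auto

lemma Xs_le: "\<omega> \<in> \<Omega> \<Longrightarrow> m \<le> n \<Longrightarrow> Xs n \<omega> \<le> Xs m \<omega>"
  using decseqD[OF Xs_decseq] by blast

lemma X_le: "\<omega> \<in> \<Omega> \<Longrightarrow> X \<omega> \<le> Xs n \<omega>"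
  using decseq_ge[OF Xs_decseq] Xs_lim by blast

lemma int_le: "\<mu> \<in> M \<Longrightarrow> m \<le> n \<Longrightarrow> (\<integral>\<omega>. Xs n \<omega> \<partial>\<mu>) \<le> (\<integral>\<omega>. Xs m \<omega> \<partial>\<mu>)"
  using Xs_le caZ_space BZ_int Xs_B by (intro integral_mono) auto

lemma int_conv: assumes mu: "\<mu> \<in> M" shows "(\<lambda>n. \<integral>\<omega>. Xs n \<omega> \<partial>\<mu>) \<longlonglongrightarrow> (\<integral>\<omega>. X \<omega> \<partial>\<mu>)"
proof (rule integral_dominated_convergence[where w="\<lambda>\<omega>. \<bar>Xs 0 \<omega>\<bar> + \<bar>X \<omega>\<bar>"])
  show "X \<in> borel_measurable \<mu>" using caZ_meas[OF mu BZ_meas[OF X_B]] .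
  show "Xs i \<in> borel_measurable \<mu>" for i using caZ_meas[OF mu BZ_meas[OF Xs_B]] .
  show "integrable \<mu> (\<lambda>\<omega>. \<bar>Xs 0 \<omega>\<bar> + \<bar>X \<omega>\<bar>)"
    using BZ_int[OF Xs_B mu] BZ_int[OF X_B mu] by auto
  show "AE x in \<mu>. (\<lambda>i. Xs i x) \<longlonglongrightarrow> X x" using Xs_lim caZ_space[OF mu] by (intro AE_I2) auto
  show "AE x in \<mu>. norm (Xs i x) \<le> \<bar>Xs 0 x\<bar> + \<bar>X x\<bar>" for i
    using Xs_le[of _ 0 i] X_le[of _ i] caZ_space[OF mu] by (intro AE_I2) fastforce
qed

lemma psi_decseq: "decseq (\<lambda>n. ps (Xs n))"
  using psi_mono Xs_B Xs_le unfolding decseq_def by blast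

lemma psi_X_le: "ps X \<le> ps (Xs n)"
  using psi_mono Xs_B X_B X_le by blast

definition "pX = real_of_ereal (ps X)"

lemma pX: "ps X = ereal pX"
  using psi_fin[OF X_B] unfolding pX_def by (cases "ps X") auto

lemma bound0: "\<exists>c\<ge>0. \<forall>n. \<forall>\<omega>\<in>\<Omega>. Xs n \<omega> \<le> c * Z \<omega>"
proof -
  obtain c where c: "c \<ge> 0" "\<forall>\<omega>\<in>\<Omega>. \<bar>Xs 0 \<omega>\<bar> \<le> c * Z \<omega>" using BZ_bound[OF Xs_B] by blast
  have "Xs n \<omega> \<le> c * Z \<omega>" if "\<omega> \<in> \<Omega>" for n \<omega>
    using Xs_le[OF that, of 0 n] c that by force
  then show ?thesis using c by blast
qed

lemma tailX: "\<exists>R. \<forall>\<mu>\<in>M. \<forall>n. \<alpha> \<mu> > ereal R \<longrightarrow> ereal (\<integral>\<omega>. Xs n \<omega> \<partial>\<mu>) - \<alpha> \<mu> < ereal (pX - 1)"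
proof -
  obtain c where c: "c \<ge> 0" "\<forall>n. \<forall>\<omega>\<in>\<Omega>. Xs n \<omega> \<le> c * Z \<omega>" using bound0 by blast
  obtain R B where RB: "\<forall>\<mu>\<in>M. \<forall>X\<in>B_Z \<Omega> Z. (\<forall>\<omega>\<in>\<Omega>. X \<omega> \<le> c * Z \<omega>) \<longrightarrow>
     (\<alpha> \<mu> > ereal R \<longrightarrow> ereal (\<integral>\<omega>. X \<omega> \<partial>\<mu>) - \<alpha> \<mu> < ereal (pX - 1))"
    using tail[OF c(1), of "pX - 1"] by blast
  show ?thesis using RB c Xs_B by blast
qed

lemma conv_from_eps:
  assumes "\<And>e. e > 0 \<Longrightarrow> \<exists>N. ps (Xs N) \<le> ereal (pX + e)"
  shows "decseq (\<lambda>n. ps (Xs n)) \<and> (\<lambda>n. ps (Xs n)) \<longlonglongrightarrow> ps X"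
  using eps_conv[OF psi_decseq, of pX] psi_decseq psi_X_le pX assms by auto

lemma term_le: "\<mu> \<in> M \<Longrightarrow> \<alpha> \<mu> = ereal r \<Longrightarrow> (\<integral>\<omega>. X \<omega> \<partial>\<mu>) - r \<le> pX"
  using psi_ge[of \<mu> X] pX by simp

text \<open>Part (ii): Dini argument\<close>
lemma part2:
  assumes cpt: "\<forall>a::real. compactin (weak_top \<Omega> Z)
           ((weak_top \<Omega> Z) closure_of {\<mu>\<in>M. \<alpha> \<mu> \<le> ereal a})"
    and XC: "X \<in> C_Z \<Omega> Z"
  shows "decseq (\<lambda>n. ps (Xs n)) \<and> (\<lambda>n. ps (Xs n)) \<longlonglongrightarrow> ps X"
proof (rule conv_from_eps)
  fix e :: real assume e: "e > 0"
  obtain R where R: "\<forall>\<mu>\<in>M. \<forall>n. \<alpha> \<mu> > ereal R \<longrightarrow> ereal (\<integral>\<omega>. Xs n \<omega> \<partial>\<mu>) - \<alpha> \<mu> < ereal (pX - 1)"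
    using tailX by blast
  define S where "S = {\<mu>\<in>M. \<alpha> \<mu> \<le> ereal R}"
  define K where "K = (weak_top \<Omega> Z) closure_of S"
  have K: "compactin (weak_top \<Omega> Z) K" using cpt unfolding K_def S_def by blast
  have SK: "S \<subseteq> K" unfolding K_def by (rule closure_of_subset) (auto simp: wt_topspace S_def)
  define D where "D n = (\<lambda>\<omega>. Xs n \<omega> - X \<omega>)" for n
  define Op where "Op n = {\<mu>\<in>M. (\<integral>\<omega>. D n \<omega> \<partial>\<mu>) \<in> {..<e}}" for n
  have DI: "(\<integral>\<omega>. D n \<omega> \<partial>\<mu>) = (\<integral>\<omega>. Xs n \<omega> \<partial>\<mu>) - (\<integral>\<omega>. X \<omega> \<partial>\<mu>)" if "\<mu> \<in> M" for n \<mu>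
    unfolding D_def using BZ_int[OF Xs_B that] BZ_int[OF X_B that] by simp
  have Oopen: "openin (weak_top \<Omega> Z) (Op n)" for n
    unfolding Op_def D_def by (intro wt_open CZ_diff Xs_C XC) auto
  have Omono: "Op m \<subseteq> Op n" if "m \<le> n" for m n
    using int_le[OF _ that] DI unfolding Op_def by fastforce
  have Kcov: "K \<subseteq> \<Union>(range Op)"
  proof
    fix \<mu> assume "\<mu> \<in> K"
    then have mu: "\<mu> \<in> M" using compactin_subset_topspace[OF K] wt_topspace by blast
    have "(\<lambda>n. (\<integral>\<omega>. D n \<omega> \<partial>\<mu>)) \<longlonglongrightarrow> (\<integral>\<omega>. X \<omega> \<partial>\<mu>) - (\<integral>\<omega>. X \<omega> \<partial>\<mu>)"
      unfolding DI[OF mu] by (intro tendsto_diff int_conv mu tendsto_const)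
    then have "eventually (\<lambda>n. (\<integral>\<omega>. D n \<omega> \<partial>\<mu>) < e) sequentially"
      using e by (intro order_tendstoD(2)) auto
    then obtain n where "(\<integral>\<omega>. D n \<omega> \<partial>\<mu>) < e" by (auto simp: eventually_sequentially)
    then show "\<mu> \<in> \<Union>(range Op)" using mu unfolding Op_def by auto
  qed
  obtain F where F: "finite F" "F \<subseteq> range Op" "K \<subseteq> \<Union>F"
    using K Oopen Kcov unfolding compactin_def by (metis (no_types, lifting) rangeE)
  obtain C where C: "finite C" "F = Op ` C" using finite_subset_image[OF F(1) F(2)] by blast
  obtain N where N: "\<forall>n\<in>C. n \<le> N" using C(1) finite_nat_set_iff_bounded_le by blast
  have KN: "K \<subseteq> Op N" using F(3) C(2) N Omono by blast
  show "\<exists>N. ps (Xs N) \<le> ereal (pX + e)"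
  proof (intro exI[of _ N])
    show "ps (Xs N) \<le> ereal (pX + e)" unfolding psi_def
    proof (rule SUP_least)
      fix \<mu> assume mu: "\<mu> \<in> M"
      show "ereal (\<integral>\<omega>. Xs N \<omega> \<partial>\<mu>) - \<alpha> \<mu> \<le> ereal (pX + e)"
      proof (cases "\<alpha> \<mu> > ereal R")
        case True
        then have "ereal (\<integral>\<omega>. Xs N \<omega> \<partial>\<mu>) - \<alpha> \<mu> < ereal (pX - 1)" using R mu by blast
        moreover have "ereal (pX - 1) \<le> ereal (pX + e)" using e by simp
        ultimately show ?thesis by (meson less_imp_le order_less_le_trans)
      next
        case False
        then have "\<mu> \<in> Op N" using mu KN SK unfolding S_def by auto
        then have lt: "(\<integral>\<omega>. Xs N \<omega> \<partial>\<mu>) < (\<integral>\<omega>. X \<omega> \<partial>\<mu>) + e" using DI[OF mu] unfolding Op_def by auto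
        show ?thesis
        proof (cases "\<alpha> \<mu>")
          case (real r)
          then show ?thesis using lt term_le[OF mu real] by simp
        qed (use mu \<alpha>_not_minf in auto)
      qed
    qed
  qed
qed

end



context dseq begin

lemma core:
  assumes cpt: "\<forall>a::real. compactin (weak_top \<Omega> Z) {\<mu>\<in>M. \<alpha> \<mu> \<le> ereal a}"
    and H: "Hausdorff_space (weak_top \<Omega> Z)"
    and emono: "\<And>n. e n \<le> e (Suc n)" and e0: "e 0 \<ge> pX - 1"
    and gt: "\<And>n. ps (Xs n) > ereal (e n)"
  shows "\<exists>\<mu>\<in>M. \<exists>r. \<alpha> \<mu> = ereal r \<and> (\<forall>n. (\<integral>\<omega>. Xs n \<omega> \<partial>\<mu>) - r \<ge> e n)"
proof -
  let ?T = "weak_top \<Omega> Z"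
  obtain R where R: "\<forall>\<mu>\<in>M. \<forall>n. \<alpha> \<mu> > ereal R \<longrightarrow> ereal (\<integral>\<omega>. Xs n \<omega> \<partial>\<mu>) - \<alpha> \<mu> < ereal (pX - 1)"
    using tailX by blast
  have emon: "e m \<le> e n" if "m \<le> n" for m n using emono that by (rule lift_Suc_mono_le)
  have clos: "closedin ?T {\<mu>\<in>M. \<alpha> \<mu> \<le> ereal a}" for a
    using compactin_imp_closedin[OF H] cpt by blast
  define S where "S = {\<mu>\<in>M. \<alpha> \<mu> \<le> ereal R}"
  have Sc: "compactin ?T S" using cpt unfolding S_def by blast
  define G where "G n = {\<mu>\<in>S. ereal (\<integral>\<omega>. Xs n \<omega> \<partial>\<mu>) - \<alpha> \<mu> \<ge> ereal (e n)}" for n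
  have Gne: "G n \<noteq> {}" for n
  proof -
    obtain \<mu> where mu: "\<mu> \<in> M" "ereal (e n) < ereal (\<integral>\<omega>. Xs n \<omega> \<partial>\<mu>) - \<alpha> \<mu>"
      using gt[of n] unfolding psi_def less_SUP_iff by blast
    have "e n \<ge> pX - 1" using e0 emon[of 0 n] by simp
    then have "ereal (pX - 1) \<le> ereal (e n)" by simp
    then have "\<not> \<alpha> \<mu> > ereal R" using R mu by (meson order_less_le_trans order_less_asym)
    then have "\<mu> \<in> G n" using mu unfolding G_def S_def by auto
    then show ?thesis by blast
  qed
  have Gmono: "G (Suc n) \<subseteq> G n" for n
  proof
    fix \<mu> assume "\<mu> \<in> G (Suc n)"
    then have mu: "\<mu> \<in> S" "ereal (\<integral>\<omega>. Xs (Suc n) \<omega> \<partial>\<mu>) - \<alpha> \<mu> \<ge> ereal (e (Suc n))"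
      unfolding G_def by auto
    have "(\<integral>\<omega>. Xs (Suc n) \<omega> \<partial>\<mu>) \<le> (\<integral>\<omega>. Xs n \<omega> \<partial>\<mu>)" using int_le mu(1) unfolding S_def by auto
    then have "ereal (\<integral>\<omega>. Xs (Suc n) \<omega> \<partial>\<mu>) - \<alpha> \<mu> \<le> ereal (\<integral>\<omega>. Xs n \<omega> \<partial>\<mu>) - \<alpha> \<mu>"
      by (intro ereal_minus_mono) auto
    moreover have "ereal (e n) \<le> ereal (e (Suc n))" using emono[of n] by simp
    ultimately have "ereal (e n) \<le> ereal (\<integral>\<omega>. Xs n \<omega> \<partial>\<mu>) - \<alpha> \<mu>"
      using mu(2) by (meson order_trans)
    then show "\<mu> \<in> G n" using mu(1) unfolding G_def by auto
  qed
  have Gmon: "G n \<subseteq> G m" if "m \<le> n" for m n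
    using that by (induction rule: dec_induct) (use Gmono in blast)+
  have Gclosed: "closedin ?T (G n)" for n
  proof -
    define Hs where "Hs = {\<mu>\<in>M. ereal (\<integral>\<omega>. Xs n \<omega> \<partial>\<mu>) - \<alpha> \<mu> \<ge> ereal (e n)}"
    have "openin ?T (M - Hs)"
    proof (subst openin_subopen, intro ballI)
      fix \<mu> assume mu: "\<mu> \<in> M - Hs"
      define v where "v = (\<integral>\<omega>. Xs n \<omega> \<partial>\<mu>)"
      have lt: "ereal v - \<alpha> \<mu> < ereal (e n)" using mu unfolding Hs_def v_def by auto
      obtain b where b: "v - e n < b" "ereal b < \<alpha> \<mu>"
      proof (cases "\<alpha> \<mu>")
        case (real r)
        then have "v - e n < r" using lt by simp
        then show ?thesis using that[of "(v - e n + r)/2"] real by simp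
      next
        case PInf then show ?thesis using that[of "v - e n + 1"] by simp
      next
        case MInf then show ?thesis using mu \<alpha>_not_minf by simp
      qed
      define T where "T = {\<nu>\<in>M. (\<integral>\<omega>. Xs n \<omega> \<partial>\<nu>) \<in> {..<b + e n}} \<inter> (M - {\<nu>\<in>M. \<alpha> \<nu> \<le> ereal b})"
      have "openin ?T T" unfolding T_def
        using wt_open[OF Xs_C, of "{..<b + e n}"] clos[of b] wt_topspace
        by (intro openin_Int) (auto simp: closedin_def)
      moreover have "\<mu> \<in> T" using mu b unfolding T_def v_def by auto
      moreover have "T \<subseteq> M - Hs"
      proof
        fix \<nu> assume nu: "\<nu> \<in> T"
        then have a: "(\<integral>\<omega>. Xs n \<omega> \<partial>\<nu>) < b + e n" "ereal b < \<alpha> \<nu>" "\<nu> \<in> M" unfolding T_def by auto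
        have "ereal (\<integral>\<omega>. Xs n \<omega> \<partial>\<nu>) - \<alpha> \<nu> < ereal (e n)"
          using a by (cases "\<alpha> \<nu>") auto
        then show "\<nu> \<in> M - Hs" using a unfolding Hs_def by auto
      qed
      ultimately show "\<exists>T. openin ?T T \<and> \<mu> \<in> T \<and> T \<subseteq> M - Hs" by blast
    qed
    then have "closedin ?T Hs" unfolding closedin_def wt_topspace Hs_def by auto
    moreover have "G n = S \<inter> Hs" unfolding G_def Hs_def S_def by auto
    ultimately show ?thesis using clos[of R] unfolding S_def by auto
  qed
  have "\<exists>\<mu>\<in>S. \<forall>n. \<mu> \<in> G n"
  proof (rule ccontr)
    assume "\<not> ?thesis"
    then have cov: "S \<subseteq> \<Union>(range (\<lambda>n. M - G n))" using S_def by blast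
    have op: "openin ?T (M - G n)" for n using Gclosed[of n] unfolding closedin_def wt_topspace by simp
    obtain F where F: "finite F" "F \<subseteq> range (\<lambda>n. M - G n)" "S \<subseteq> \<Union>F"
      using conjunct2[OF Sc[unfolded compactin_def], rule_format, of "range (\<lambda>n. M - G n)"] cov op by blast
    obtain C where C: "finite C" "F = (\<lambda>n. M - G n) ` C" using finite_subset_image[OF F(1) F(2)] by blast
    obtain N where N: "\<forall>n\<in>C. n \<le> N" using C(1) finite_nat_set_iff_bounded_le by blast
    have "S \<subseteq> M - G N" using F(3) C(2) N Gmon by blast
    moreover have "G N \<subseteq> S" unfolding G_def by auto
    ultimately show False using Gne[of N] by blast
  qed
  then obtain \<mu> where mu: "\<mu> \<in> S" "\<And>n. \<mu> \<in> G n" by blast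
  then have muM: "\<mu> \<in> M" unfolding S_def by auto
  obtain r where r: "\<alpha> \<mu> = ereal r" using mu(1) muM \<alpha>_not_minf unfolding S_def by (cases "\<alpha> \<mu>") auto
  have "\<forall>n. (\<integral>\<omega>. Xs n \<omega> \<partial>\<mu>) - r \<ge> e n" using mu(2) r unfolding G_def by auto
  then show ?thesis using muM r by blast
qed

lemma part3a:
  assumes cpt: "\<forall>a::real. compactin (weak_top \<Omega> Z) {\<mu>\<in>M. \<alpha> \<mu> \<le> ereal a}"
    and H: "Hausdorff_space (weak_top \<Omega> Z)"
  shows "decseq (\<lambda>n. ps (Xs n)) \<and> (\<lambda>n. ps (Xs n)) \<longlonglongrightarrow> ps X"
proof (rule conv_from_eps)
  fix e :: real assume e: "e > 0"
  show "\<exists>N. ps (Xs N) \<le> ereal (pX + e)"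
  proof (rule ccontr)
    assume "\<not> ?thesis"
    then have gt: "ps (Xs n) > ereal (pX + e)" for n using not_le by blast
    obtain \<mu> r where mu: "\<mu> \<in> M" "\<alpha> \<mu> = ereal r" "\<forall>n. (\<integral>\<omega>. Xs n \<omega> \<partial>\<mu>) - r \<ge> pX + e"
      using core[OF cpt H, of "\<lambda>_. pX + e"] gt e by auto
    have "(\<lambda>n. (\<integral>\<omega>. Xs n \<omega> \<partial>\<mu>) - r) \<longlonglongrightarrow> (\<integral>\<omega>. X \<omega> \<partial>\<mu>) - r"
      by (intro tendsto_diff int_conv mu tendsto_const)
    then have "pX + e \<le> (\<integral>\<omega>. X \<omega> \<partial>\<mu>) - r" using mu(3) by (intro LIMSEQ_le_const) auto
    then show False using term_le[OF mu(1,2)] e by simp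
  qed
qed

lemma part3b:
  assumes cpt: "\<forall>a::real. compactin (weak_top \<Omega> Z) {\<mu>\<in>M. \<alpha> \<mu> \<le> ereal a}"
    and H: "Hausdorff_space (weak_top \<Omega> Z)"
  shows "\<exists>\<mu>\<in>M. ps X = ereal (\<integral>\<omega>. X \<omega> \<partial>\<mu>) - \<alpha> \<mu>"
proof -
  define e where "e n = pX - 1 / (real n + 1)" for n
  have emono: "e n \<le> e (Suc n)" for n unfolding e_def by (simp add: frac_le)
  have gt: "ps (Xs n) > ereal (e n)" for n
  proof -
    have "e n < pX" unfolding e_def by simp
    then have "ereal (e n) < ps X" using pX by simp
    then show ?thesis using psi_X_le[of n] by (rule order_less_le_trans)
  qed
  obtain \<mu> r where mu: "\<mu> \<in> M" "\<alpha> \<mu> = ereal r" "\<forall>n. (\<integral>\<omega>. Xs n \<omega> \<partial>\<mu>) - r \<ge> e n"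
    using core[OF cpt H emono _ gt] unfolding e_def by auto
  have "(\<lambda>n. (\<integral>\<omega>. Xs n \<omega> \<partial>\<mu>) - r) \<longlonglongrightarrow> (\<integral>\<omega>. X \<omega> \<partial>\<mu>) - r"
    by (intro tendsto_diff int_conv mu tendsto_const)
  moreover have "(\<lambda>n. 1 / (real n + 1)) \<longlonglongrightarrow> 0"
    using LIMSEQ_inverse_real_of_nat by (simp add: inverse_eq_divide add.commute)
  then have "e \<longlonglongrightarrow> pX - 0" unfolding e_def
    by (intro tendsto_diff tendsto_const)
  ultimately have "pX \<le> (\<integral>\<omega>. X \<omega> \<partial>\<mu>) - r" using mu(3) by (intro LIMSEQ_le[of e _ ]) auto
  then have "ps X \<le> ereal (\<integral>\<omega>. X \<omega> \<partial>\<mu>) - \<alpha> \<mu>" using pX mu(2) by simp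
  moreover have "ereal (\<integral>\<omega>. X \<omega> \<partial>\<mu>) - \<alpha> \<mu> \<le> ps X" using psi_ge[OF mu(1)] .
  ultimately show ?thesis using mu(1) by (intro bexI[of _ \<mu>]) auto
qed

end



lemma sigma_sets_Int_gen:
  assumes "A \<subseteq> sp"
  shows "(\<inter>) A ` sigma_sets sp st = sigma_sets A ((\<inter>) A ` st)"
proof (intro equalityI subsetI)
  fix x assume "x \<in> (\<inter>) A ` sigma_sets sp st"
  then obtain y where "y \<in> sigma_sets sp st" "x = y \<inter> A" by auto
  then have "x \<in> sigma_sets (A \<inter> sp) ((\<inter>) A ` st)"
  proof (induct arbitrary: x)
    case (Compl a)
    then show ?case
      by (force intro!: sigma_sets.Compl simp: Diff_Int_distrib ac_simps)
  next
    case (Union a)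
    then show ?case
      by (auto intro!: sigma_sets.Union
               simp add: UN_extend_simps simp del: UN_simps)
  qed (auto intro!: sigma_sets.intros(2-))
  then show "x \<in> sigma_sets A ((\<inter>) A ` st)"
    using \<open>A \<subseteq> sp\<close> by (simp add: Int_absorb2)
next
  fix x assume "x \<in> sigma_sets A ((\<inter>) A ` st)"
  then show "x \<in> (\<inter>) A ` sigma_sets sp st"
  proof induct
    case (Compl a)
    then obtain x where "a = A \<inter> x" "x \<in> sigma_sets sp st" by auto
    then show ?case using \<open>A \<subseteq> sp\<close>
      by (force simp add: image_iff intro!: bexI[of _ "sp - x"] sigma_sets.Compl)
  next
    case (Union a)
    then have "\<forall>i. \<exists>x. x \<in> sigma_sets sp st \<and> a i = A \<inter> x"
      by (auto simp: image_iff Bex_def)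
    then obtain f where "\<forall>x. f x \<in> sigma_sets sp st \<and> a x = A \<inter> f x"
      by metis
    then show ?case
      by (auto intro!: bexI[of _ "(\<Union>x. f x)"] sigma_sets.Union
               simp add: image_iff)
  qed (auto intro!: sigma_sets.intros(2-))
qed

context zset begin

lemma sets_gen: "sets (restrict_space borel \<Omega>) = sigma_sets \<Omega> ((\<inter>) \<Omega> ` Collect closed)"
proof -
  have "sets (borel :: 'a measure) = sigma_sets UNIV (Collect closed)"
    unfolding borel_eq_closed by (rule sets_measure_of) auto
  then show ?thesis unfolding sets_restrict_space using sigma_sets_Int_gen[of \<Omega> UNIV] by simp
qed

lemma closed_eq:
  assumes mu: "\<mu> \<in> M" and nu: "\<nu> \<in> M" and eq: "\<forall>X\<in>C_Z \<Omega> Z. (\<integral>\<omega>. X \<omega> \<partial>\<mu>) = (\<integral>\<omega>. X \<omega> \<partial>\<nu>)"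
    and C: "closed C"
  shows "emeasure \<mu> (\<Omega> \<inter> C) = emeasure \<nu> (\<Omega> \<inter> C)"
proof (cases "C = {}")
  case True then show ?thesis by simp
next
  case False
  define f where "f k \<omega> = max 0 (1 - real k * infdist \<omega> C)" for k \<omega>
  have inS: "\<Omega> \<inter> C \<in> sets (restrict_space borel \<Omega>)"
    unfolding sets_restrict_space using C by auto
  have fC: "f k \<in> C_Z \<Omega> Z" for k
  proof -
    have cont: "continuous_on \<Omega> (f k)" unfolding f_def
      by (intro continuous_on_max continuous_on_const continuous_on_diff continuous_on_mult continuous_on_infdist continuous_on_id)
    have "\<forall>\<omega>\<in>\<Omega>. \<bar>f k \<omega> / Z \<omega>\<bar> \<le> 1"
    proof
      fix \<omega> assume w: "\<omega> \<in> \<Omega>"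
      have Z: "Z \<omega> \<ge> 1" using w Z_ge1 by auto
      have "0 \<le> f k \<omega>" "f k \<omega> \<le> 1" unfolding f_def using infdist_nonneg[of \<omega> C] by auto
      then have "f k \<omega> / Z \<omega> \<le> 1" "0 \<le> f k \<omega> / Z \<omega>" using Z by (auto simp: divide_le_eq)
      then show "\<bar>f k \<omega> / Z \<omega>\<bar> \<le> 1" by simp
    qed
    then show ?thesis using cont borel_measurable_continuous_on_restrict[OF cont]
      by (auto simp: C_Z_def B_Z_def)
  qed
  have flim: "(\<lambda>k. f k \<omega>) \<longlonglongrightarrow> indicator (\<Omega> \<inter> C) \<omega>" if w: "\<omega> \<in> \<Omega>" for \<omega>
  proof (cases "\<omega> \<in> C")
    case True
    then show ?thesis using w unfolding f_def by simp
  next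
    case False
    then have d: "infdist \<omega> C > 0" using in_closed_iff_infdist_zero[OF C \<open>C \<noteq> {}\<close>] infdist_nonneg[of \<omega> C] by auto
    obtain k0 :: nat where k0: "1 / infdist \<omega> C < real k0" using reals_Archimedean2 by blast
    have "eventually (\<lambda>k. f k \<omega> = 0) sequentially"
      unfolding eventually_sequentially
    proof (intro exI[of _ k0] allI impI)
      fix k assume "k0 \<le> k"
      then have "1 / infdist \<omega> C < real k" using k0 by (meson less_le_trans of_nat_le_iff)
      then have "1 < real k * infdist \<omega> C" using d by (simp add: divide_less_eq)
      then show "f k \<omega> = 0" unfolding f_def by simp
    qed
    then have "(\<lambda>k. f k \<omega>) \<longlonglongrightarrow> 0" by (rule tendsto_eventually)
    then show ?thesis using False by simp
  qed
  have lim: "(\<lambda>k. \<integral>\<omega>. f k \<omega> \<partial>\<rho>) \<longlonglongrightarrow> measure \<rho> (\<Omega> \<inter> C)" if rho: "\<rho> \<in> M" for \<rho>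
  proof -
    interpret finite_measure \<rho> using caZ_finite[OF rho] .
    have "(\<lambda>k. \<integral>\<omega>. f k \<omega> \<partial>\<rho>) \<longlonglongrightarrow> (\<integral>\<omega>. indicator (\<Omega> \<inter> C) \<omega> \<partial>\<rho>)"
    proof (rule integral_dominated_convergence[where w="\<lambda>_. 1"])
      show "indicator (\<Omega> \<inter> C) \<in> borel_measurable \<rho>"
        using inS caZ_sets[OF rho] by (intro borel_measurable_indicator) simp
      show "f i \<in> borel_measurable \<rho>" for i using caZ_meas[OF rho] fC[of i] by (auto simp: C_Z_def B_Z_def)
      show "integrable \<rho> (\<lambda>_. 1::real)" by simp
      show "AE x in \<rho>. (\<lambda>i. f i x) \<longlonglongrightarrow> indicator (\<Omega> \<inter> C) x"
        using flim caZ_space[OF rho] by (intro AE_I2) auto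
      show "AE x in \<rho>. norm (f i x) \<le> 1" for i
      proof (intro AE_I2)
        fix x
        have "0 \<le> real i * infdist x C" by (simp add: infdist_nonneg)
        then show "norm (f i x) \<le> 1" unfolding f_def by simp
      qed
    qed
    also have "(\<integral>\<omega>. indicator (\<Omega> \<inter> C) \<omega> \<partial>\<rho>) = measure \<rho> (\<Omega> \<inter> C)"
      using caZ_space[OF rho] by (simp add: Int_absorb2)
    finally show ?thesis .
  qed
  have "measure \<mu> (\<Omega> \<inter> C) = measure \<nu> (\<Omega> \<inter> C)"
  proof -
    have "(\<lambda>k. \<integral>\<omega>. f k \<omega> \<partial>\<mu>) = (\<lambda>k. \<integral>\<omega>. f k \<omega> \<partial>\<nu>)" using eq fC by blast
    then show ?thesis using lim[OF mu] lim[OF nu] LIMSEQ_unique by metis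
  qed
  moreover have "emeasure \<rho> (\<Omega> \<inter> C) = measure \<rho> (\<Omega> \<inter> C)" if rho: "\<rho> \<in> M" for \<rho>
    using finite_measure.emeasure_eq_measure[OF caZ_finite[OF rho]] by simp
  ultimately show ?thesis using mu nu by simp
qed

lemma sep:
  assumes mu: "\<mu> \<in> M" and nu: "\<nu> \<in> M" and eq: "\<forall>X\<in>C_Z \<Omega> Z. (\<integral>\<omega>. X \<omega> \<partial>\<mu>) = (\<integral>\<omega>. X \<omega> \<partial>\<nu>)"
  shows "\<mu> = \<nu>"
proof (rule measure_eqI_generator_eq[where E="(\<inter>) \<Omega> ` Collect closed" and \<Omega>=\<Omega> and A="\<lambda>_. \<Omega>"])
  show "Int_stable ((\<inter>) \<Omega> ` Collect closed)"
    unfolding Int_stable_def 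
  proof (intro ballI)
    fix a b assume "a \<in> (\<inter>) \<Omega> ` Collect closed" "b \<in> (\<inter>) \<Omega> ` Collect closed"
    then obtain A B where "closed A" "closed B" "a = \<Omega> \<inter> A" "b = \<Omega> \<inter> B" by auto
    then show "a \<inter> b \<in> (\<inter>) \<Omega> ` Collect closed" by (intro image_eqI[of _ _ "A \<inter> B"]) auto
  qed
  show "(\<inter>) \<Omega> ` Collect closed \<subseteq> Pow \<Omega>" by auto
  show "\<And>X. X \<in> (\<inter>) \<Omega> ` Collect closed \<Longrightarrow> emeasure \<mu> X = emeasure \<nu> X"
    using closed_eq[OF mu nu eq] by auto
  show "sets \<mu> = sigma_sets \<Omega> ((\<inter>) \<Omega> ` Collect closed)" using caZ_sets[OF mu] sets_gen by simp
  show "sets \<nu> = sigma_sets \<Omega> ((\<inter>) \<Omega> ` Collect closed)" using caZ_sets[OF nu] sets_gen by simp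
  show "range (\<lambda>_. \<Omega>) \<subseteq> (\<inter>) \<Omega> ` Collect closed" by (auto intro!: image_eqI[of _ _ UNIV])
  show "(\<Union>i. \<Omega>) = \<Omega>" by simp
  show "emeasure \<mu> \<Omega> \<noteq> \<infinity>" for i :: nat
    using finite_measure.emeasure_finite[OF caZ_finite[OF mu]] by simp
qed

lemma wt_Hausdorff: "Hausdorff_space (weak_top \<Omega> Z)"
  unfolding Hausdorff_space_def wt_topspace
proof (intro allI impI, elim conjE)
  fix \<mu> \<nu> assume mu: "\<mu> \<in> M" and nu: "\<nu> \<in> M" and ne: "\<mu> \<noteq> \<nu>"
  then obtain X where X: "X \<in> C_Z \<Omega> Z" "(\<integral>\<omega>. X \<omega> \<partial>\<mu>) \<noteq> (\<integral>\<omega>. X \<omega> \<partial>\<nu>)" using sep by blast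
  define a where "a = (\<integral>\<omega>. X \<omega> \<partial>\<mu>)"
  define b where "b = (\<integral>\<omega>. X \<omega> \<partial>\<nu>)"
  define d where "d = dist a b / 2"
  have d: "d > 0" using X(2) unfolding d_def a_def b_def by simp
  define U where "U = {\<rho>\<in>M. (\<integral>\<omega>. X \<omega> \<partial>\<rho>) \<in> ball a d}"
  define V where "V = {\<rho>\<in>M. (\<integral>\<omega>. X \<omega> \<partial>\<rho>) \<in> ball b d}"
  have "openin (weak_top \<Omega> Z) U" "openin (weak_top \<Omega> Z) V"
    unfolding U_def V_def using wt_open[OF X(1), of "ball a d"] wt_open[OF X(1), of "ball b d"] by auto
  moreover have "\<mu> \<in> U" "\<nu> \<in> V" unfolding U_def V_def using mu nu d a_def b_def by auto
  moreover have "disjnt U V"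
  proof -
    have False if "\<rho> \<in> U" "\<rho> \<in> V" for \<rho>
    proof -
      have "dist a (\<integral>\<omega>. X \<omega> \<partial>\<rho>) < d" "dist b (\<integral>\<omega>. X \<omega> \<partial>\<rho>) < d"
        using that unfolding U_def V_def by auto
      moreover have "dist a b \<le> dist a (\<integral>\<omega>. X \<omega> \<partial>\<rho>) + dist b (\<integral>\<omega>. X \<omega> \<partial>\<rho>)"
        by (rule dist_triangle2)
      ultimately show False unfolding d_def by linarith
    qed
    then show ?thesis unfolding disjnt_def by blast
  qed
  ultimately show "\<exists>U V. openin (weak_top \<Omega> Z) U \<and> openin (weak_top \<Omega> Z) V \<and> \<mu> \<in> U \<and> \<nu> \<in> V \<and> disjnt U V"
    by blast
qed

end



context zset begin

lemma usc_local:
  assumes X: "usc_on \<Omega> X" and w: "\<omega> \<in> \<Omega>" and a: "a > X \<omega> / Z \<omega>"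
  shows "\<exists>\<delta>>0. \<forall>y\<in>\<Omega>. dist y \<omega> < \<delta> \<longrightarrow> X y / Z y < a"
proof -
  define Y where "Y \<omega> = X \<omega> / Z \<omega>" for \<omega>
  have Zw: "Z \<omega> \<ge> 1" using Z_ge1 w by auto
  define a' where "a' = X \<omega> + (a - Y \<omega>) * Z \<omega> / 2"
  have a'X: "a' > X \<omega>" unfolding a'_def using a Zw Y_def by simp
  have a'Z: "a' / Z \<omega> = Y \<omega> + (a - Y \<omega>) / 2"
    unfolding a'_def Y_def using Zw by (simp add: field_simps)
  obtain T where T: "open T" "{y\<in>\<Omega>. X y < a'} = \<Omega> \<inter> T"
    using X unfolding usc_on_def openin_open by blast
  have "\<omega> \<in> T" using T(2) w a'X by blast
  then obtain d1 where d1: "d1 > 0" "\<And>y. dist y \<omega> < d1 \<Longrightarrow> y \<in> T"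
    using T(1) unfolding open_dist by blast
  have contq: "continuous_on \<Omega> (\<lambda>y. a' / Z y)"
    using Z_cont Z_ge1 by (intro continuous_on_divide continuous_on_const) fastforce+
  have e: "(a - Y \<omega>) / 2 > 0" using a Y_def by simp
  obtain d2 where d2: "d2 > 0" "\<And>y. y \<in> \<Omega> \<Longrightarrow> dist y \<omega> < d2 \<Longrightarrow> dist (a' / Z y) (a' / Z \<omega>) < (a - Y \<omega>) / 2"
    using contq[unfolded continuous_on_iff] w e by metis
  show ?thesis
  proof (intro exI[of _ "min d1 d2"] conjI ballI impI)
    fix y assume y: "y \<in> \<Omega>" "dist y (\<omega>) < min d1 d2"
    have "y \<in> T" using d1 y by simp
    then have Xy: "X y < a'" using T(2) y(1) by blast
    have Zy: "Z y \<ge> 1" using Z_ge1 y by auto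
    have "\<bar>a' / Z y - a' / Z \<omega>\<bar> < (a - Y \<omega>) / 2" using d2(2)[OF y(1)] y(2) by (simp add: dist_real_def)
    then have "a' / Z y - a' / Z \<omega> < (a - Y \<omega>) / 2" by (meson abs_ge_self order_le_less_trans)
    then have "a' / Z y < a' / Z \<omega> + (a - Y \<omega>) / 2" by linarith
    then have "a' / Z y < a" using a'Z by simp
    moreover have "X y / Z y < a' / Z y" using Xy Zy by (simp add: divide_strict_right_mono)
    ultimately show "X y / Z y < a" by simp
  qed (use d1 d2 in auto)
qed

lemma usc_approx:
  assumes X: "X \<in> U_Z \<Omega> Z" and ne: "\<Omega> \<noteq> {}"
  shows "\<exists>Xs. (\<forall>n. Xs n \<in> C_Z \<Omega> Z) \<and> (\<forall>\<omega>\<in>\<Omega>. \<forall>n. Xs (Suc n) \<omega> \<le> Xs n \<omega>)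
            \<and> (\<forall>\<omega>\<in>\<Omega>. (\<lambda>n. Xs n \<omega>) \<longlonglongrightarrow> X \<omega>)"
proof -
  have usc: "usc_on \<Omega> X" using X by (simp add: U_Z_def)
  obtain c0 where c0: "\<forall>\<omega>\<in>\<Omega>. \<bar>X \<omega> / Z \<omega>\<bar> \<le> c0" using X by (auto simp: U_Z_def B_Z_def)
  define c where "c = max c0 0"
  define Y where "Y \<omega> = X \<omega> / Z \<omega>" for \<omega>
  have Yabs: "\<bar>Y \<omega>\<bar> \<le> c" if "\<omega> \<in> \<Omega>" for \<omega> using c0 that unfolding c_def Y_def by force
  have Yb: "-c \<le> Y \<omega>" "Y \<omega> \<le> c" if "\<omega> \<in> \<Omega>" for \<omega> using Yabs[OF that] by (simp_all add: abs_le_iff)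
  define Yn where "Yn n \<omega> = (SUP y\<in>\<Omega>. Y y - real n * dist \<omega> y)" for n \<omega>
  have bdd: "bdd_above ((\<lambda>y. Y y - real n * dist \<omega> y) ` \<Omega>)" for n \<omega>
  proof (rule bdd_aboveI2)
    fix y assume "y \<in> \<Omega>"
    have "0 \<le> real n * dist \<omega> y" by simp
    then show "Y y - real n * dist \<omega> y \<le> c" using Yb(2)[of y] \<open>y \<in> \<Omega>\<close> by linarith
  qed
  have Yge: "Y \<omega> \<le> Yn n \<omega>" if "\<omega> \<in> \<Omega>" for n \<omega>
    using cSUP_upper[OF that bdd[of n \<omega>]] unfolding Yn_def by simp
  have Yle: "Yn n \<omega> \<le> c" for n \<omega>
    unfolding Yn_def
  proof (rule cSUP_least[OF ne])
    fix y assume y: "y \<in> \<Omega>"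
    have "0 \<le> real n * dist \<omega> y" by simp
    then show "Y y - real n * dist \<omega> y \<le> c" using Yb(2)[OF y] by linarith
  qed
  have Ydec: "Yn (Suc n) \<omega> \<le> Yn n \<omega>" for n \<omega>
    unfolding Yn_def
  proof (rule cSUP_least[OF ne])
    fix y assume y: "y \<in> \<Omega>"
    have "Y y - real (Suc n) * dist \<omega> y \<le> Y y - real n * dist \<omega> y"
      by (simp add: algebra_simps)
    also have "\<dots> \<le> (SUP y\<in>\<Omega>. Y y - real n * dist \<omega> y)" using cSUP_upper[OF y bdd] .
    finally show "Y y - real (Suc n) * dist \<omega> y \<le> (SUP y\<in>\<Omega>. Y y - real n * dist \<omega> y)" .
  qed
  have Ylip1: "Yn n \<omega>1 \<le> Yn n \<omega>2 + real n * dist \<omega>1 \<omega>2" for n \<omega>1 \<omega>2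
    unfolding Yn_def
  proof (rule cSUP_least[OF ne])
    fix y assume y: "y \<in> \<Omega>"
    have "dist \<omega>2 y \<le> dist \<omega>1 \<omega>2 + dist \<omega>1 y" by (metis dist_commute dist_triangle)
    then have "real n * dist \<omega>2 y \<le> real n * dist \<omega>1 y + real n * dist \<omega>1 \<omega>2"
      by (metis add.commute distrib_left mult_left_mono of_nat_0_le_iff)
    then have "Y y - real n * dist \<omega>1 y \<le> (Y y - real n * dist \<omega>2 y) + real n * dist \<omega>1 \<omega>2" by linarith
    also have "\<dots> \<le> (SUP y\<in>\<Omega>. Y y - real n * dist \<omega>2 y) + real n * dist \<omega>1 \<omega>2"
      using cSUP_upper[OF y bdd] by simp
    finally show "Y y - real n * dist \<omega>1 y \<le> (SUP y\<in>\<Omega>. Y y - real n * dist \<omega>2 y) + real n * dist \<omega>1 \<omega>2" .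
  qed
  have Ycont: "continuous_on \<Omega> (Yn n)" for n
  proof (rule lipschitz_on_continuous_on[of "real n"], rule lipschitz_onI)
    fix x y
    show "dist (Yn n x) (Yn n y) \<le> real n * dist x y"
      using Ylip1[of n x y] Ylip1[of n y x] by (simp add: dist_real_def dist_commute abs_le_iff)
  qed simp
  have Ylim: "(\<lambda>n. Yn n \<omega>) \<longlonglongrightarrow> Y \<omega>" if w: "\<omega> \<in> \<Omega>" for \<omega>
  proof (rule LIMSEQ_I)
    fix r :: real assume r: "r > 0"
    obtain \<delta> where \<delta>: "\<delta> > 0" "\<forall>y\<in>\<Omega>. dist y \<omega> < \<delta> \<longrightarrow> X y / Z y < Y \<omega> + r / 2"
      using usc_local[OF usc w, of "Y \<omega> + r/2"] r unfolding Y_def by auto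
    obtain N :: nat where N: "(c - Y \<omega>) / \<delta> < real N" using reals_Archimedean2 by blast
    have "\<forall>n\<ge>N. norm (Yn n \<omega> - Y \<omega>) < r"
    proof (intro allI impI)
      fix n assume n: "N \<le> n"
      have "Yn n \<omega> \<le> Y \<omega> + r / 2" unfolding Yn_def
      proof (rule cSUP_least[OF ne])
        fix y assume y: "y \<in> \<Omega>"
        show "Y y - real n * dist \<omega> y \<le> Y \<omega> + r / 2"
        proof (cases "dist y \<omega> < \<delta>")
          case True
          then have "Y y < Y \<omega> + r / 2" using \<delta> y unfolding Y_def by auto
          moreover have "0 \<le> real n * dist \<omega> y" by simp
          ultimately show ?thesis by linarith
        next
          case False
          have "c - Y \<omega> < real N * \<delta>" using N \<delta>(1) by (simp add: divide_less_eq)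
          also have "\<dots> \<le> real n * dist \<omega> y" using False n \<delta>(1)
            by (intro mult_mono) (auto simp: dist_commute)
          finally show ?thesis using Yb[OF y] r by simp
        qed
      qed
      then show "norm (Yn n \<omega> - Y \<omega>) < r" using Yge[OF w, of n] r by simp
    qed
    then show "\<exists>no. \<forall>n\<ge>no. norm (Yn n \<omega> - Y \<omega>) < r" by blast
  qed
  define Xs where "Xs n \<omega> = Yn n \<omega> * Z \<omega>" for n \<omega>
  show ?thesis
  proof (intro exI[of _ Xs] conjI allI ballI)
    fix n
    have cont: "continuous_on \<Omega> (Xs n)" unfolding Xs_def by (intro continuous_on_mult Ycont Z_cont)
    have "\<bar>Xs n \<omega> / Z \<omega>\<bar> \<le> c" if "\<omega> \<in> \<Omega>" for \<omega>
    proof -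
      have "Z \<omega> \<ge> 1" using Z_ge1 that by auto
      then have "Xs n \<omega> / Z \<omega> = Yn n \<omega>" unfolding Xs_def by simp
      moreover have "-c \<le> Yn n \<omega>" using Yb(1)[OF that] Yge[OF that, of n] by simp
      ultimately show ?thesis using Yle[of n \<omega>] by simp
    qed
    then show "Xs n \<in> C_Z \<Omega> Z" using cont borel_measurable_continuous_on_restrict[OF cont]
      by (auto simp: C_Z_def B_Z_def)
  next
    fix \<omega> n assume w: "\<omega> \<in> \<Omega>"
    show "Xs (Suc n) \<omega> \<le> Xs n \<omega>" unfolding Xs_def using Ydec Z_ge1 w
      by (intro mult_right_mono) auto
  next
    fix \<omega> assume w: "\<omega> \<in> \<Omega>"
    have "Z \<omega> \<ge> 1" using Z_ge1 w by auto
    then have "X \<omega> = Y \<omega> * Z \<omega>" unfolding Y_def by simp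
    then show "(\<lambda>n. Xs n \<omega>) \<longlonglongrightarrow> X \<omega>" unfolding Xs_def
      by (simp add: tendsto_mult_right Ylim[OF w])
  qed
qed

end

theorem lemmaA4:
  fixes k0 :: "'k::finite"
    and \<Omega> :: "(real^'k^'t::finite) set"
    and Z :: "real^'k^'t \<Rightarrow> real"
    and \<alpha> :: "(real^'k^'t) measure \<Rightarrow> ereal"
    and \<phi> :: "real \<Rightarrow> ereal"
  assumes \<Omega>_sub: "\<Omega> \<subseteq> state_space k0"
    and \<Omega>_ne: "\<Omega> \<noteq> {}"
    and Z_cont: "continuous_on \<Omega> Z"
    and Z_ge1: "\<forall>\<omega>\<in>\<Omega>. Z \<omega> \<ge> 1"
    and Z_sublevel: "\<forall>z\<ge>0. compact {\<omega>\<in>\<Omega>. Z \<omega> \<le> z}"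
    and \<alpha>_not_minf: "\<forall>\<mu>\<in>ca_Z \<Omega> Z. \<alpha> \<mu> \<noteq> -\<infinity>"
    and \<alpha>_inf_real: "(INF \<mu>\<in>ca_Z \<Omega> Z. \<alpha> \<mu>) \<noteq> \<infinity> \<and> (INF \<mu>\<in>ca_Z \<Omega> Z. \<alpha> \<mu>) \<noteq> -\<infinity>"
    and \<phi>_not_minf: "\<forall>x\<ge>0. \<phi> x \<noteq> -\<infinity>"
    and \<phi>_growth: "((\<lambda>x. \<phi> x / ereal x) \<longlongrightarrow> \<infinity>) at_top"
    and \<alpha>_ge_\<phi>: "\<forall>\<mu>\<in>ca_Z \<Omega> Z. \<alpha> \<mu> \<ge> \<phi> (\<integral>\<omega>. Z \<omega> \<partial>\<mu>)"
  shows
   "(\<forall>X\<in>B_Z \<Omega> Z. psi \<Omega> Z \<alpha> X \<noteq> \<infinity> \<and> psi \<Omega> Z \<alpha> X \<noteq> -\<infinity>)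
    \<and> (\<forall>X\<in>B_Z \<Omega> Z. \<forall>Y\<in>B_Z \<Omega> Z. (\<forall>\<omega>\<in>\<Omega>. X \<omega> \<ge> Y \<omega>) \<longrightarrow> psi \<Omega> Z \<alpha> X \<ge> psi \<Omega> Z \<alpha> Y)
    \<and> (\<forall>X\<in>B_Z \<Omega> Z. \<forall>Y\<in>B_Z \<Omega> Z. \<forall>l::real. 0 \<le> l \<and> l \<le> 1 \<longrightarrow>
         psi \<Omega> Z \<alpha> (\<lambda>\<omega>. l * X \<omega> + (1 - l) * Y \<omega>)
           \<le> ereal l * psi \<Omega> Z \<alpha> X + ereal (1 - l) * psi \<Omega> Z \<alpha> Y)
    \<and> ((\<forall>a::real. compactin (weak_top \<Omega> Z)
           ((weak_top \<Omega> Z) closure_of {\<mu>\<in>ca_Z \<Omega> Z. \<alpha> \<mu> \<le> ereal a})) \<longrightarrow>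
        (\<forall>Xs X. (\<forall>n. Xs n \<in> C_Z \<Omega> Z) \<and> X \<in> C_Z \<Omega> Z
            \<and> (\<forall>\<omega>\<in>\<Omega>. \<forall>n. Xs (Suc n) \<omega> \<le> Xs n \<omega>)
            \<and> (\<forall>\<omega>\<in>\<Omega>. (\<lambda>n. Xs n \<omega>) \<longlonglongrightarrow> X \<omega>)
          \<longrightarrow> decseq (\<lambda>n. psi \<Omega> Z \<alpha> (Xs n))
              \<and> (\<lambda>n. psi \<Omega> Z \<alpha> (Xs n)) \<longlonglongrightarrow> psi \<Omega> Z \<alpha> X))
    \<and> ((\<forall>a::real. compactin (weak_top \<Omega> Z) {\<mu>\<in>ca_Z \<Omega> Z. \<alpha> \<mu> \<le> ereal a}) \<longrightarrow>
        (\<forall>Xs X. (\<forall>n. Xs n \<in> C_Z \<Omega> Z) \<and> X \<in> U_Z \<Omega> Z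
            \<and> (\<forall>\<omega>\<in>\<Omega>. \<forall>n. Xs (Suc n) \<omega> \<le> Xs n \<omega>)
            \<and> (\<forall>\<omega>\<in>\<Omega>. (\<lambda>n. Xs n \<omega>) \<longlonglongrightarrow> X \<omega>)
          \<longrightarrow> decseq (\<lambda>n. psi \<Omega> Z \<alpha> (Xs n))
              \<and> (\<lambda>n. psi \<Omega> Z \<alpha> (Xs n)) \<longlonglongrightarrow> psi \<Omega> Z \<alpha> X)
        \<and> (\<forall>X\<in>U_Z \<Omega> Z. \<exists>\<mu>\<in>ca_Z \<Omega> Z.
              psi \<Omega> Z \<alpha> X = ereal (\<integral>\<omega>. X \<omega> \<partial>\<mu>) - \<alpha> \<mu>))"
proof -
  interpret P: psiset \<Omega> Z \<alpha> \<phi>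
    by unfold_locales (use Z_cont Z_ge1 \<alpha>_not_minf \<alpha>_inf_real \<phi>_growth \<alpha>_ge_\<phi> in auto)
  have p1: "\<forall>X\<in>B_Z \<Omega> Z. psi \<Omega> Z \<alpha> X \<noteq> \<infinity> \<and> psi \<Omega> Z \<alpha> X \<noteq> -\<infinity>"
    using P.psi_fin by blast
  have p2: "\<forall>X\<in>B_Z \<Omega> Z. \<forall>Y\<in>B_Z \<Omega> Z. (\<forall>\<omega>\<in>\<Omega>. X \<omega> \<ge> Y \<omega>) \<longrightarrow> psi \<Omega> Z \<alpha> X \<ge> psi \<Omega> Z \<alpha> Y"
    using P.psi_mono by blast
  have p3: "\<forall>X\<in>B_Z \<Omega> Z. \<forall>Y\<in>B_Z \<Omega> Z. \<forall>l::real. 0 \<le> l \<and> l \<le> 1 \<longrightarrow>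
         psi \<Omega> Z \<alpha> (\<lambda>\<omega>. l * X \<omega> + (1 - l) * Y \<omega>)
           \<le> ereal l * psi \<Omega> Z \<alpha> X + ereal (1 - l) * psi \<Omega> Z \<alpha> Y"
    using P.psi_convex by blast
  have p4: "(\<forall>a::real. compactin (weak_top \<Omega> Z)
           ((weak_top \<Omega> Z) closure_of {\<mu>\<in>ca_Z \<Omega> Z. \<alpha> \<mu> \<le> ereal a})) \<longrightarrow>
        (\<forall>Xs X. (\<forall>n. Xs n \<in> C_Z \<Omega> Z) \<and> X \<in> C_Z \<Omega> Z
            \<and> (\<forall>\<omega>\<in>\<Omega>. \<forall>n. Xs (Suc n) \<omega> \<le> Xs n \<omega>)
            \<and> (\<forall>\<omega>\<in>\<Omega>. (\<lambda>n. Xs n \<omega>) \<longlonglongrightarrow> X \<omega>)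
          \<longrightarrow> decseq (\<lambda>n. psi \<Omega> Z \<alpha> (Xs n))
              \<and> (\<lambda>n. psi \<Omega> Z \<alpha> (Xs n)) \<longlonglongrightarrow> psi \<Omega> Z \<alpha> X)"
  proof (intro impI allI)
    fix Xs X
    assume cpt: "\<forall>a::real. compactin (weak_top \<Omega> Z)
           ((weak_top \<Omega> Z) closure_of {\<mu>\<in>ca_Z \<Omega> Z. \<alpha> \<mu> \<le> ereal a})"
      and h: "(\<forall>n. Xs n \<in> C_Z \<Omega> Z) \<and> X \<in> C_Z \<Omega> Z
            \<and> (\<forall>\<omega>\<in>\<Omega>. \<forall>n. Xs (Suc n) \<omega> \<le> Xs n \<omega>)
            \<and> (\<forall>\<omega>\<in>\<Omega>. (\<lambda>n. Xs n \<omega>) \<longlonglongrightarrow> X \<omega>)"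
    interpret D: dseq \<Omega> Z \<alpha> \<phi> Xs X
      by unfold_locales (use h P.C_sub_B in auto)
    show "decseq (\<lambda>n. psi \<Omega> Z \<alpha> (Xs n)) \<and> (\<lambda>n. psi \<Omega> Z \<alpha> (Xs n)) \<longlonglongrightarrow> psi \<Omega> Z \<alpha> X"
      using D.part2 cpt h by blast
  qed
  have p5: "(\<forall>a::real. compactin (weak_top \<Omega> Z) {\<mu>\<in>ca_Z \<Omega> Z. \<alpha> \<mu> \<le> ereal a}) \<longrightarrow>
        (\<forall>Xs X. (\<forall>n. Xs n \<in> C_Z \<Omega> Z) \<and> X \<in> U_Z \<Omega> Z
            \<and> (\<forall>\<omega>\<in>\<Omega>. \<forall>n. Xs (Suc n) \<omega> \<le> Xs n \<omega>)
            \<and> (\<forall>\<omega>\<in>\<Omega>. (\<lambda>n. Xs n \<omega>) \<longlonglongrightarrow> X \<omega>)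
          \<longrightarrow> decseq (\<lambda>n. psi \<Omega> Z \<alpha> (Xs n))
              \<and> (\<lambda>n. psi \<Omega> Z \<alpha> (Xs n)) \<longlonglongrightarrow> psi \<Omega> Z \<alpha> X)
        \<and> (\<forall>X\<in>U_Z \<Omega> Z. \<exists>\<mu>\<in>ca_Z \<Omega> Z.
              psi \<Omega> Z \<alpha> X = ereal (\<integral>\<omega>. X \<omega> \<partial>\<mu>) - \<alpha> \<mu>)"
  proof (intro impI)
    assume cpt: "\<forall>a::real. compactin (weak_top \<Omega> Z) {\<mu>\<in>ca_Z \<Omega> Z. \<alpha> \<mu> \<le> ereal a}"
    have q1: "decseq (\<lambda>n. psi \<Omega> Z \<alpha> (Xs n)) \<and> (\<lambda>n. psi \<Omega> Z \<alpha> (Xs n)) \<longlonglongrightarrow> psi \<Omega> Z \<alpha> X"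
      if h: "(\<forall>n. Xs n \<in> C_Z \<Omega> Z) \<and> X \<in> U_Z \<Omega> Z
            \<and> (\<forall>\<omega>\<in>\<Omega>. \<forall>n. Xs (Suc n) \<omega> \<le> Xs n \<omega>)
            \<and> (\<forall>\<omega>\<in>\<Omega>. (\<lambda>n. Xs n \<omega>) \<longlonglongrightarrow> X \<omega>)" for Xs X
    proof -
      interpret D: dseq \<Omega> Z \<alpha> \<phi> Xs X
        by unfold_locales (use h P.C_sub_B in auto)
      show ?thesis using D.part3a cpt P.wt_Hausdorff by blast
    qed
    have q2: "\<exists>\<mu>\<in>ca_Z \<Omega> Z. psi \<Omega> Z \<alpha> X = ereal (\<integral>\<omega>. X \<omega> \<partial>\<mu>) - \<alpha> \<mu>"
      if X: "X \<in> U_Z \<Omega> Z" for X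
    proof -
    obtain Xs where h: "(\<forall>n. Xs n \<in> C_Z \<Omega> Z) \<and> (\<forall>\<omega>\<in>\<Omega>. \<forall>n. Xs (Suc n) \<omega> \<le> Xs n \<omega>)
            \<and> (\<forall>\<omega>\<in>\<Omega>. (\<lambda>n. Xs n \<omega>) \<longlonglongrightarrow> X \<omega>)"
      using P.usc_approx[OF X \<Omega>_ne] by blast
    interpret D: dseq \<Omega> Z \<alpha> \<phi> Xs X
      by unfold_locales (use h X P.C_sub_B in auto)
    show ?thesis using D.part3b cpt P.wt_Hausdorff by blast
    qed
    show "(\<forall>Xs X. (\<forall>n. Xs n \<in> C_Z \<Omega> Z) \<and> X \<in> U_Z \<Omega> Z
            \<and> (\<forall>\<omega>\<in>\<Omega>. \<forall>n. Xs (Suc n) \<omega> \<le> Xs n \<omega>)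
            \<and> (\<forall>\<omega>\<in>\<Omega>. (\<lambda>n. Xs n \<omega>) \<longlonglongrightarrow> X \<omega>)
          \<longrightarrow> decseq (\<lambda>n. psi \<Omega> Z \<alpha> (Xs n))
              \<and> (\<lambda>n. psi \<Omega> Z \<alpha> (Xs n)) \<longlonglongrightarrow> psi \<Omega> Z \<alpha> X)
        \<and> (\<forall>X\<in>U_Z \<Omega> Z. \<exists>\<mu>\<in>ca_Z \<Omega> Z.
              psi \<Omega> Z \<alpha> X = ereal (\<integral>\<omega>. X \<omega> \<partial>\<mu>) - \<alpha> \<mu>)"
      using q1 q2 by blast
  qed
  show ?thesis using p1 p2 p3 p4 p5 by blast
qed

end
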